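(* Let $X$ be a locally compact, geodesically complete CAT(0)-space connected at infinity, $x_0\in X$ and $y\in\overline X\setminus\{x_0\}$. Let $c\colon[0,\infty)\to X$ be the geodesic ray with $c(0)=x_0$ passing through $y$ (i.e. $c(|x_0y|)=y$ if $y\in X$, or $c(+\infty)=y$ if $y\in\partial_\infty X$). If the direction of $c$ at $x_0$ has a unique inverse direction in $\Sigma_{x_0}X$, then for any $z',z''\in\operatorname{Shadow}_y(x_0)$ we have $\operatorname{Shadow}_{z'}(x_0)=\operatorname{Shadow}_{z''}(x_0)$.
   Context: $\overline X=X\cup\partial_\infty X$. For $y,z\in\overline X$, $[yz]$ denotes a geodesic segment, ray or complete geodesic joining them; $\operatorname{Shadow}_y(x)=\{z\in\overline X:\ \text{there is }[yz]\text{ with }x\in[yz]\}$. $\Sigma_xX$ is the space of directions at $x$ (metric completion of the space of germs of geodesics from $x$ with the Alexandrov angle); two directions are mutually inverse if the angle between them is $\pi$. *)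

theory Defs
  imports "HOL-Analysis.Analysis"
begin

(* The CAT(0) space X is the whole carrier type 'a (a complete metric space). *)

definition geod_seg :: "(real \<Rightarrow> 'a::metric_space) \<Rightarrow> 'a \<Rightarrow> 'a \<Rightarrow> bool" where
  "geod_seg g p q \<longleftrightarrow> g 0 = p \<and> g (dist p q) = q \<and>
     (\<forall>s\<in>{0..dist p q}. \<forall>t\<in>{0..dist p q}. dist (g s) (g t) = \<bar>s - t\<bar>)"

definition geod_ray :: "(real \<Rightarrow> 'a::metric_space) \<Rightarrow> bool" where
  "geod_ray r \<longleftrightarrow> (\<forall>s\<ge>0. \<forall>t\<ge>0. dist (r s) (r t) = \<bar>s - t\<bar>)"

definition geod_line :: "(real \<Rightarrow> 'a::metric_space) \<Rightarrow> bool" where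
  "geod_line l \<longleftrightarrow> (\<forall>s t. dist (l s) (l t) = \<bar>s - t\<bar>)"

definition geodesic_space :: "'a::metric_space itself \<Rightarrow> bool" where
  "geodesic_space _ \<longleftrightarrow> (\<forall>p q::'a. \<exists>g. geod_seg g p q)"

(* Comparison point on the side [P,Q] of a Euclidean triangle (in the plane = complex numbers). *)
definition cmp_pt :: "complex \<Rightarrow> complex \<Rightarrow> real \<Rightarrow> real \<Rightarrow> complex" where
  "cmp_pt P Q d s = P + of_real (s / d) * (Q - P)"

definition cat0_ineq :: "'a::metric_space itself \<Rightarrow> bool" where
  "cat0_ineq _ \<longleftrightarrow>
    (\<forall>(p::'a) q r g1 g2 g3 A B C.
       geod_seg g1 p q \<and> geod_seg g2 q r \<and> geod_seg g3 r p \<and>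
       cmod (A - B) = dist p q \<and> cmod (B - C) = dist q r \<and> cmod (C - A) = dist r p \<longrightarrow>
       (\<forall>(g, d, P, Q) \<in> {(g1, dist p q, A, B), (g2, dist q r, B, C), (g3, dist r p, C, A)}.
        \<forall>(g', d', P', Q') \<in> {(g1, dist p q, A, B), (g2, dist q r, B, C), (g3, dist r p, C, A)}.
        \<forall>s\<in>{0..d}. \<forall>t\<in>{0..d'}.
          dist (g s) (g' t) \<le> cmod (cmp_pt P Q d s - cmp_pt P' Q' d' t)))"

definition CAT0 :: "'a::metric_space itself \<Rightarrow> bool" where
  "CAT0 T \<longleftrightarrow> geodesic_space T \<and> cat0_ineq T"

definition geodesically_complete :: "'a::metric_space itself \<Rightarrow> bool" where
  "geodesically_complete _ \<longleftrightarrow>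
    (\<forall>g (p::'a) q. geod_seg g p q \<and> p \<noteq> q \<longrightarrow>
       (\<exists>l. geod_line l \<and> (\<forall>s\<in>{0..dist p q}. l s = g s)))"

definition connected_at_infinity :: "'a::metric_space itself \<Rightarrow> bool" where
  "connected_at_infinity _ \<longleftrightarrow>
    (\<forall>C::'a set. compact C \<longrightarrow> (\<exists>D. compact D \<and> C \<subseteq> D \<and>
        (\<forall>p q. p \<notin> D \<and> q \<notin> D \<longrightarrow> path_component (- C) p q)))"

definition asymptotic :: "(real \<Rightarrow> 'a::metric_space) \<Rightarrow> (real \<Rightarrow> 'a) \<Rightarrow> bool" where
  "asymptotic r r' \<longleftrightarrow> (\<exists>B. \<forall>t\<ge>0. dist (r t) (r' t) \<le> B)"

definition ray_class :: "(real \<Rightarrow> 'a::metric_space) \<Rightarrow> (real \<Rightarrow> 'a) set" where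
  "ray_class r = {r'. geod_ray r' \<and> asymptotic r r'}"

datatype 'a bpt = Fin 'a | Ideal "(real \<Rightarrow> 'a) set"

(* Xbar = X \<union> \<partial>\<infinity>X, ideal points being asymptote classes of geodesic rays. *)
definition Xbar :: "'a::metric_space bpt set" where
  "Xbar = range Fin \<union> {Ideal (ray_class r) | r. geod_ray r}"

(* Point sets of the geodesics [yz] (segment, ray or complete geodesic) joining y and z. *)
fun geods :: "'a::metric_space bpt \<Rightarrow> 'a bpt \<Rightarrow> 'a set set" where
  "geods (Fin p) (Fin q) = {g ` {0..dist p q} | g. geod_seg g p q}"
| "geods (Fin p) (Ideal D) = {r ` {0..} | r. geod_ray r \<and> r 0 = p \<and> r \<in> D}"
| "geods (Ideal C) (Fin q) = {r ` {0..} | r. geod_ray r \<and> r 0 = q \<and> r \<in> C}"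
| "geods (Ideal C) (Ideal D) =
     {range l | l. geod_line l \<and> l \<in> D \<and> (\<lambda>t. l (- t)) \<in> C}"

definition Shadow :: "'a::metric_space bpt \<Rightarrow> 'a \<Rightarrow> 'a bpt set" where
  "Shadow y x = {z \<in> Xbar. \<exists>S \<in> geods y z. x \<in> S}"

fun ray_through :: "(real \<Rightarrow> 'a::metric_space) \<Rightarrow> 'a \<Rightarrow> 'a bpt \<Rightarrow> bool" where
  "ray_through c x0 (Fin p) = (c (dist x0 p) = p)"
| "ray_through c x0 (Ideal C) = (c \<in> C)"

definition geod_from :: "'a::metric_space \<Rightarrow> (real \<Rightarrow> 'a) \<times> real \<Rightarrow> bool" where
  "geod_from x u \<longleftrightarrow> 0 < snd u \<and> fst u 0 = x \<and>
     (\<forall>s\<in>{0..snd u}. \<forall>t\<in>{0..snd u}. dist (fst u s) (fst u t) = \<bar>s - t\<bar>)"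

definition cmp_angle :: "'a::metric_space \<Rightarrow> 'a \<Rightarrow> 'a \<Rightarrow> real" where
  "cmp_angle x p q = arccos ((dist x p ^ 2 + dist x q ^ 2 - dist p q ^ 2) / (2 * dist x p * dist x q))"

definition alex_angle :: "'a::metric_space \<Rightarrow> (real \<Rightarrow> 'a) \<times> real \<Rightarrow> (real \<Rightarrow> 'a) \<times> real \<Rightarrow> real" where
  "alex_angle x u v = Inf {Sup {cmp_angle x (fst u s) (fst v t) | s t. 0 < s \<and> s < e \<and> 0 < t \<and> t < e}
                           | e. 0 < e \<and> e \<le> min (snd u) (snd v)}"

(* Elements of \<Sigma>_x X = completion: Cauchy sequences of geodesic germs w.r.t. the angle. *)
definition dir_cauchy :: "'a::metric_space \<Rightarrow> (nat \<Rightarrow> (real \<Rightarrow> 'a) \<times> real) \<Rightarrow> bool" where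
  "dir_cauchy x v \<longleftrightarrow> (\<forall>n. geod_from x (v n)) \<and>
     (\<forall>e>0. \<exists>N. \<forall>m\<ge>N. \<forall>n\<ge>N. alex_angle x (v m) (v n) < e)"

definition unique_inverse_dir :: "'a::metric_space \<Rightarrow> (real \<Rightarrow> 'a) \<times> real \<Rightarrow> bool" where
  "unique_inverse_dir x u \<longleftrightarrow>
     (\<exists>v. dir_cauchy x v \<and> (\<lambda>n. alex_angle x u (v n)) \<longlonglongrightarrow> pi) \<and>
     (\<forall>v w. dir_cauchy x v \<and> dir_cauchy x w \<and>
            (\<lambda>n. alex_angle x u (v n)) \<longlonglongrightarrow> pi \<and> (\<lambda>n. alex_angle x u (w n)) \<longlonglongrightarrow> pi
            \<longrightarrow> (\<lambda>n. alex_angle x (v n) (w n)) \<longlonglongrightarrow> 0)"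

end

theory Submission
  imports Defs
begin

lemma cmp_bound:
  fixes x p q :: "'a::metric_space"
  assumes "dist x p > 0" "dist x q > 0"
  shows "-1 \<le> (dist x p ^ 2 + dist x q ^ 2 - dist p q ^ 2) / (2 * dist x p * dist x q)"
    and "(dist x p ^ 2 + dist x q ^ 2 - dist p q ^ 2) / (2 * dist x p * dist x q) \<le> 1"
proof -
  let ?a = "dist x p" and ?b = "dist x q" and ?c = "dist p q"
  have t1: "?c \<le> ?a + ?b" by (metis dist_commute dist_triangle)
  have t2: "?a \<le> ?c + ?b" by (metis dist_commute dist_triangle)
  have t3: "?b \<le> ?a + ?c" by (metis dist_commute dist_triangle)
  have c0: "?c \<ge> 0" by simp
  have pos: "2 * ?a * ?b > 0" using assms by simp
  have "?c ^ 2 \<le> (?a + ?b)^2" using t1 c0 by (simp add: power_mono)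
  hence "-(2 * ?a * ?b) \<le> ?a ^ 2 + ?b ^ 2 - ?c ^ 2" by (simp add: power2_eq_square algebra_simps)
  thus "-1 \<le> (?a ^ 2 + ?b ^ 2 - ?c ^ 2) / (2 * ?a * ?b)" using pos by (simp add: field_simps)
  have "\<bar>?a - ?b\<bar> \<le> ?c" using t2 t3 by linarith
  hence "(?a - ?b) ^ 2 \<le> ?c ^ 2" by (metis abs_ge_zero power2_abs power_mono)
  hence "?a ^ 2 + ?b ^ 2 - ?c ^ 2 \<le> 2 * ?a * ?b" by (simp add: power2_eq_square algebra_simps)
  thus "(?a ^ 2 + ?b ^ 2 - ?c ^ 2) / (2 * ?a * ?b) \<le> 1" using pos by (simp add: field_simps)
qed

lemma cmp_angle_bounds:
  fixes x p q :: "'a::metric_space"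
  assumes "dist x p > 0" "dist x q > 0"
  shows "0 \<le> cmp_angle x p q" "cmp_angle x p q \<le> pi"
  using arccos_bounded[OF cmp_bound[OF assms]] unfolding cmp_angle_def by auto

lemma L1:
  fixes g h :: "real \<Rightarrow> 'a::metric_space"
  assumes cat: "CAT0 TYPE('a)"
    and g0: "g 0 = x" and h0: "h 0 = x"
    and gi: "\<forall>a\<in>{0..S}. \<forall>b\<in>{0..S}. dist (g a) (g b) = \<bar>a - b\<bar>"
    and hi: "\<forall>a\<in>{0..T}. \<forall>b\<in>{0..T}. dist (h a) (h b) = \<bar>a - b\<bar>"
    and S: "S > 0" and T: "T > 0" and s: "0 \<le> s" "s \<le> S" and t: "0 \<le> t" "t \<le> T"
  shows "dist (g s) (h t) ^ 2 \<le> s^2 + t^2 - (s * t / (S * T)) * (S^2 + T^2 - dist (g S) (h T) ^ 2)"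
proof -
  define d where "d = dist (g S) (h T)"
  have dS: "dist x (g S) = S" using gi S g0 by (metis abs_0_eq abs_minus_commute abs_of_pos atLeastAtMost_iff diff_0 less_eq_real_def order_refl abs_minus_cancel)
  have dT: "dist (h T) x = T" using hi T h0 by (smt (verit) atLeastAtMost_iff)
  from cat obtain g2 where g2: "geod_seg g2 (g S) (h T)"
    unfolding CAT0_def geodesic_space_def by blast
  have cat': "cat0_ineq TYPE('a)" using cat unfolding CAT0_def by simp
  define g3 where "g3 = (\<lambda>a. h (T - a))"
  have sg1: "geod_seg g x (g S)" unfolding geod_seg_def using g0 dS gi by simp
  have sg3: "geod_seg g3 (h T) x" unfolding geod_seg_def g3_def using dT hi h0
    apply (simp add: dist_commute)
    apply (intro ballI)
    subgoal for a b using hi[rule_format, of "T - a" "T - b"] by (simp add: abs_minus_commute)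
    done
  define q where "q = (S^2 + T^2 - d^2) / (2 * S * T)"
  have dxT: "dist x (h T) = T" using dT by (simp add: dist_commute)
  have qb: "-1 \<le> q" "q \<le> 1" unfolding q_def d_def
    using cmp_bound[of x "g S" "h T"] dS dxT S T by auto
  define th where "th = arccos q"
  have costh: "cos th = q" unfolding th_def using arccos qb by blast
  define A :: complex where "A = 0"
  define B :: complex where "B = of_real S"
  define C :: complex where "C = of_real T * cis th"
  have n1: "cmod (A - B) = S" unfolding A_def B_def using S by simp
  have n3: "cmod (C - A) = T" unfolding A_def C_def using T by (simp add: norm_mult)
  have "cmod (B - C) ^ 2 = (S - T * cos th)^2 + (T * sin th)^2"
    unfolding B_def C_def cmod_power2 by simp
  also have "\<dots> = S^2 + T^2 - 2 * S * T * cos th" using sin_cos_squared_add[of th] by algebra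
  also have "\<dots> = d^2" unfolding costh q_def using S T by (simp add: field_simps)
  finally have n2: "cmod (B - C) = d" using d_def by (metis norm_ge_zero power2_eq_iff_nonneg zero_le_dist)
  define L where "L = {(g, dist x (g S), A, B), (g2, dist (g S) (h T), B, C), (g3, dist (h T) x, C, A)}"
  have X: "\<forall>(gg, dd, P, Q) \<in> L. \<forall>(gg', dd', P', Q') \<in> L. \<forall>a\<in>{0..dd}. \<forall>b\<in>{0..dd'}.
          dist (gg a) (gg' b) \<le> cmod (cmp_pt P Q dd a - cmp_pt P' Q' dd' b)"
    unfolding L_def
    apply (insert cat'[unfolded cat0_ineq_def])
    apply (erule allE[of _ x], erule allE[of _ "g S"], erule allE[of _ "h T"], erule allE[of _ g],
       erule allE[of _ g2], erule allE[of _ g3], erule allE[of _ A], erule allE[of _ B], erule allE[of _ C])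
    apply (erule impE)
    using sg1 g2 sg3 n1 n2 n3 dS dT d_def apply (simp add: dist_commute)
    apply assumption
    done
  have Y0: "\<forall>(gg', dd', P', Q') \<in> L. \<forall>a\<in>{0..dist x (g S)}. \<forall>b\<in>{0..dd'}.
          dist (g a) (gg' b) \<le> cmod (cmp_pt A B (dist x (g S)) a - cmp_pt P' Q' dd' b)"
    using bspec[OF X, of "(g, dist x (g S), A, B)"] unfolding L_def by simp
  have Y: "\<forall>a\<in>{0..dist x (g S)}. \<forall>b\<in>{0..dist (h T) x}.
          dist (g a) (g3 b) \<le> cmod (cmp_pt A B (dist x (g S)) a - cmp_pt C A (dist (h T) x) b)"
    using bspec[OF Y0, of "(g3, dist (h T) x, C, A)"] unfolding L_def by simp
  have Z: "dist (g s) (h t) \<le> cmod (cmp_pt A B S s - cmp_pt C A T (T - t))"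
    using Y[unfolded dS dT, rule_format, of s "T - t"] s t unfolding g3_def by simp
  have e1: "cmp_pt A B S s = of_real s" unfolding cmp_pt_def A_def B_def using S by simp
  have e2: "cmp_pt C A T (T - t) = of_real t * cis th" unfolding cmp_pt_def A_def C_def using T
    by (simp add: field_simps)
  have "cmod (of_real s - of_real t * cis th) ^ 2 = (s - t * cos th)^2 + (t * sin th)^2"
    unfolding cmod_power2 by simp
  also have "\<dots> = s^2 + t^2 - 2 * s * t * cos th" using sin_cos_squared_add[of th] by algebra
  also have "\<dots> = s^2 + t^2 - (s * t / (S * T)) * (S^2 + T^2 - d ^ 2)"
    unfolding costh q_def using S T by (simp add: field_simps)
  finally have W: "cmod (of_real s - of_real t * cis th) ^ 2 = s^2 + t^2 - (s * t / (S * T)) * (S^2 + T^2 - d ^ 2)" .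
  have "dist (g s) (h t) ^ 2 \<le> cmod (of_real s - of_real t * cis th) ^ 2"
    using Z e1 e2 by (simp add: power_mono)
  thus ?thesis using W d_def by simp
qed

lemma Inf_const_family:
  assumes "\<exists>e. P e" "\<And>e. P e \<Longrightarrow> f e = (v::real)"
  shows "Inf {f e | e. P e} = v"
proof -
  have "{f e | e. P e} = {v}" using assms by auto
  thus ?thesis by simp
qed

lemma angle_pi:
  fixes c g :: "real \<Rightarrow> 'a::metric_space"
  assumes c: "geod_ray c" "c 0 = x" and g: "geod_from x (g, a)" and r: "\<rho> > 0"
    and opp: "\<And>s t. 0 < s \<Longrightarrow> s < \<rho> \<Longrightarrow> 0 < t \<Longrightarrow> t < \<rho> \<Longrightarrow> dist (c s) (g t) = s + t"
  shows "alex_angle x (c, 1) (g, a) = pi"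
proof -
  have a: "a > 0" and g0: "g 0 = x" and gi: "\<forall>s\<in>{0..a}. \<forall>t\<in>{0..a}. dist (g s) (g t) = \<bar>s - t\<bar>"
    using g unfolding geod_from_def by auto
  have dc: "dist x (c s) = s" if "s \<ge> 0" for s
    using c that unfolding geod_ray_def by (metis abs_minus_commute abs_of_nonneg diff_0_right order_refl)
  have dg: "dist x (g s) = s" if "s \<ge> 0" "s \<le> a" for s
    using gi g0 that a by (metis abs_minus_commute abs_of_nonneg atLeastAtMost_iff diff_0_right less_eq_real_def)
  show ?thesis
    unfolding alex_angle_def fst_conv snd_conv
  proof (rule Inf_const_family)
    show "\<exists>e. 0 < e \<and> e \<le> min 1 a" using a by (intro exI[of _ "min 1 a"]) simp
  next
    fix e assume e: "0 < e \<and> e \<le> min 1 a"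
    define m where "m = min e \<rho> / 2"
    have m: "0 < m" "m < e" "m < \<rho>" unfolding m_def using e r by auto
    have "cmp_angle x (c m) (g m) = arccos ((m^2 + m^2 - (m + m)^2) / (2 * m * m))"
      unfolding cmp_angle_def using dc[of m] dg[of m] m e opp[of m m] by simp
    also have "\<dots> = pi" using m by (simp add: power2_eq_square field_simps)
    finally have "\<exists>s t. pi = cmp_angle x (c s) (g t) \<and> 0 < s \<and> s < e \<and> 0 < t \<and> t < e"
      using m by (intro exI[of _ m]) auto
    hence mem: "pi \<in> {cmp_angle x (c s) (g t) | s t. 0 < s \<and> s < e \<and> 0 < t \<and> t < e}"
      by simp
    have ub: "\<forall>y\<in>{cmp_angle x (c s) (g t) | s t. 0 < s \<and> s < e \<and> 0 < t \<and> t < e}. y \<le> pi"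
    proof
      fix y assume "y \<in> {cmp_angle x (c s) (g t) | s t. 0 < s \<and> s < e \<and> 0 < t \<and> t < e}"
      then obtain s t where st: "y = cmp_angle x (c s) (g t)" "0 < s" "s < e" "0 < t" "t < e" by blast
      show "y \<le> pi" unfolding st(1) apply (rule cmp_angle_bounds(2))
        using dc[of s] dg[of t] st e by auto
    qed
    show "Sup {cmp_angle x (c s) (g t) | s t. 0 < s \<and> s < e \<and> 0 < t \<and> t < e} = pi"
      using cSup_eq_maximum[OF mem bspec[OF ub]] by simp
  qed
qed

lemma angle_self:
  fixes g :: "real \<Rightarrow> 'a::metric_space"
  assumes g: "geod_from x (g, a)"
  shows "alex_angle x (g, a) (g, a) = 0"
proof -
  have a: "a > 0" and g0: "g 0 = x" and gi: "\<forall>s\<in>{0..a}. \<forall>t\<in>{0..a}. dist (g s) (g t) = \<bar>s - t\<bar>"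
    using g unfolding geod_from_def by auto
  have dg: "dist x (g s) = s" if "s \<ge> 0" "s \<le> a" for s
    using gi g0 that a by (metis abs_minus_commute abs_of_nonneg atLeastAtMost_iff diff_0_right less_eq_real_def)
  show ?thesis
    unfolding alex_angle_def fst_conv snd_conv
  proof (rule Inf_const_family)
    show "\<exists>e. 0 < e \<and> e \<le> min a a" using a by (intro exI[of _ a]) simp
  next
    fix e assume e: "0 < e \<and> e \<le> min a a"
    have el: "cmp_angle x (g s) (g t) = 0" if "0 < s" "s < e" "0 < t" "t < e" for s t
    proof -
      have "dist (g s) (g t) = \<bar>s - t\<bar>" using gi that e by auto
      hence "cmp_angle x (g s) (g t) = arccos ((s^2 + t^2 - (s - t)^2) / (2 * s * t))"
        unfolding cmp_angle_def using dg[of s] dg[of t] that e by simp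
      also have "\<dots> = 0" using that by (simp add: power2_eq_square field_simps)
      finally show ?thesis .
    qed
    have "{cmp_angle x (g s) (g t) | s t. 0 < s \<and> s < e \<and> 0 < t \<and> t < e} = {0}"
    proof (rule equalityI)
      show "{0} \<subseteq> {cmp_angle x (g s) (g t) | s t. 0 < s \<and> s < e \<and> 0 < t \<and> t < e}"
      proof -
        have "\<exists>s t. 0 = cmp_angle x (g s) (g t) \<and> 0 < s \<and> s < e \<and> 0 < t \<and> t < e"
          using el[of "e/2" "e/2"] e by (intro exI[of _ "e/2"]) auto
        thus ?thesis by simp
      qed
    qed (use el in auto)
    thus "Sup {cmp_angle x (g s) (g t) | s t. 0 < s \<and> s < e \<and> 0 < t \<and> t < e} = 0"
      by simp
  qed
qed

lemma angle0_small:
  fixes g h :: "real \<Rightarrow> 'a::metric_space"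
  assumes g: "geod_from x (g, a)" and h: "geod_from x (h, b)"
    and z: "alex_angle x (g, a) (h, b) = 0" and eta: "\<eta> > 0" "\<eta> \<le> 1"
  shows "\<exists>e>0. e \<le> min a b \<and> (\<forall>s. 0 < s \<and> s < e \<longrightarrow> dist (g s) (h s) \<le> \<eta> * s)"
proof -
  have a: "a > 0" and g0: "g 0 = x" and gi: "\<forall>s\<in>{0..a}. \<forall>t\<in>{0..a}. dist (g s) (g t) = \<bar>s - t\<bar>"
    using g unfolding geod_from_def by auto
  have b: "b > 0" and h0: "h 0 = x" and hi: "\<forall>s\<in>{0..b}. \<forall>t\<in>{0..b}. dist (h s) (h t) = \<bar>s - t\<bar>"
    using h unfolding geod_from_def by auto
  have dg: "dist x (g s) = s" if "s \<ge> 0" "s \<le> a" for s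
    using gi g0 that a by (metis abs_minus_commute abs_of_nonneg atLeastAtMost_iff diff_0_right less_eq_real_def)
  have dh: "dist x (h s) = s" if "s \<ge> 0" "s \<le> b" for s
    using hi h0 that b by (metis abs_minus_commute abs_of_nonneg atLeastAtMost_iff diff_0_right less_eq_real_def)
  define q where "q = 1 - \<eta>^2/2"
  have "\<eta>^2 \<le> 1" using eta by (simp add: power_le_one)
  hence q1: "q < 1" "-1 \<le> q" unfolding q_def using eta by auto
  define \<epsilon> where "\<epsilon> = arccos q"
  have epos: "\<epsilon> > 0" unfolding \<epsilon>_def using arccos_less_arccos[OF q1(2) q1(1)] by simp
  define Os where "Os = {Sup {cmp_angle x (g s) (h t) | s t. 0 < s \<and> s < e \<and> 0 < t \<and> t < e} | e. 0 < e \<and> e \<le> min a b}"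
  have One: "Os \<noteq> {}" unfolding Os_def using a b by (auto intro!: exI[of _ "min a b"])
  have "Inf Os < \<epsilon>" using z epos unfolding Os_def alex_angle_def by simp
  then obtain ov where "ov \<in> Os" "ov < \<epsilon>" using cInf_lessD[OF One] by blast
  then obtain e where e: "0 < e" "e \<le> min a b"
    and oe: "Sup {cmp_angle x (g s) (h t) | s t. 0 < s \<and> s < e \<and> 0 < t \<and> t < e} < \<epsilon>"
    unfolding Os_def by auto
  have "dist (g s) (h s) \<le> \<eta> * s" if s: "0 < s" "s < e" for s
  proof (rule ccontr)
    assume "\<not> ?thesis"
    hence D: "dist (g s) (h s) > \<eta> * s" by simp
    have bdd: "bdd_above {cmp_angle x (g s) (h t) | s t. 0 < s \<and> s < e \<and> 0 < t \<and> t < e}"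
    proof (rule bdd_aboveI)
      fix y assume "y \<in> {cmp_angle x (g s) (h t) | s t. 0 < s \<and> s < e \<and> 0 < t \<and> t < e}"
      then obtain s t where st: "y = cmp_angle x (g s) (h t)" "0 < s" "s < e" "0 < t" "t < e" by blast
      show "y \<le> pi" unfolding st(1) apply (rule cmp_angle_bounds(2))
        using dg[of s] dh[of t] st e by auto
    qed
    have "cmp_angle x (g s) (h s) \<le> Sup {cmp_angle x (g s) (h t) | s t. 0 < s \<and> s < e \<and> 0 < t \<and> t < e}"
      apply (rule cSup_upper[OF _ bdd]) using s by blast
    hence lt: "cmp_angle x (g s) (h s) < \<epsilon>" using oe by simp
    define X where "X = (s^2 + s^2 - dist (g s) (h s) ^ 2) / (2 * s * s)"
    have ca: "cmp_angle x (g s) (h s) = arccos X" unfolding cmp_angle_def X_def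
      using dg[of s] dh[of s] s e by simp
    have Xlb: "-1 \<le> X" unfolding X_def using cmp_bound(1)[of x "g s" "h s"] dg[of s] dh[of s] s e by simp
    have "(\<eta> * s)^2 < dist (g s) (h s) ^ 2" using D eta s by (simp add: power_strict_mono)
    hence "X < q" unfolding X_def q_def using s by (simp add: field_simps power2_eq_square)
    hence "arccos q < arccos X" using arccos_less_arccos[OF Xlb _ ] q1 by simp
    thus False using lt ca \<epsilon>_def by simp
  qed
  thus ?thesis using e by blast
qed

definition rng :: "'a::metric_space \<Rightarrow> 'a bpt \<Rightarrow> real set" where
  "rng x z = (case z of Fin q \<Rightarrow> {0..dist x q} | Ideal D \<Rightarrow> {0..})"

definition glen :: "'a::metric_space \<Rightarrow> 'a bpt \<Rightarrow> real" where
  "glen x z = (case z of Fin q \<Rightarrow> dist x q | Ideal D \<Rightarrow> 1)"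

definition leg :: "'a::metric_space \<Rightarrow> 'a bpt \<Rightarrow> (real \<Rightarrow> 'a) \<Rightarrow> bool" where
  "leg x z g \<longleftrightarrow> g 0 = x \<and> (\<forall>s\<in>rng x z. \<forall>t\<in>rng x z. dist (g s) (g t) = \<bar>s - t\<bar>) \<and>
     (case z of Fin q \<Rightarrow> g (dist x q) = q | Ideal D \<Rightarrow> g \<in> D)"

lemma rng_nonneg: "s \<in> rng x z \<Longrightarrow> 0 \<le> s"
  unfolding rng_def by (cases z) auto

lemma rng_down: "s \<in> rng x z \<Longrightarrow> 0 \<le> s' \<Longrightarrow> s' \<le> s \<Longrightarrow> s' \<in> rng x z"
  unfolding rng_def by (cases z) auto

lemma rng_0: "0 \<in> rng x z"
  unfolding rng_def by (cases z) auto

lemma glen_pos: "z \<noteq> Fin x \<Longrightarrow> glen x z > 0"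
  unfolding glen_def by (cases z) auto

lemma glen_rng: "0 \<le> s \<Longrightarrow> s \<le> glen x z \<Longrightarrow> s \<in> rng x z"
  unfolding glen_def rng_def by (cases z) auto

lemma leg_iso: "leg x z g \<Longrightarrow> s \<in> rng x z \<Longrightarrow> t \<in> rng x z \<Longrightarrow> dist (g s) (g t) = \<bar>s - t\<bar>"
  unfolding leg_def by blast

lemma leg_0: "leg x z g \<Longrightarrow> g 0 = x"
  unfolding leg_def by blast

lemma leg_dist0: "leg x z g \<Longrightarrow> s \<in> rng x z \<Longrightarrow> dist x (g s) = s"
  using leg_iso[of x z g 0 s] rng_0[of x z] leg_0[of x z g] rng_nonneg[of s x z] by simp

lemma leg_geod_from: "leg x z g \<Longrightarrow> z \<noteq> Fin x \<Longrightarrow> geod_from x (g, glen x z)"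
  unfolding geod_from_def using glen_pos[of z x] glen_rng[of _ x z] leg_0[of x z g] leg_iso[of x z g]
  by auto

lemma Ideal_Xbar: "Ideal D \<in> Xbar \<Longrightarrow> \<exists>r0. geod_ray r0 \<and> D = ray_class r0"
  unfolding Xbar_def by auto

lemma asym_bound:
  assumes "Ideal D \<in> Xbar" "r \<in> D" "r' \<in> D"
  shows "\<exists>B. \<forall>t\<ge>0. dist (r t) (r' t) \<le> B"
proof -
  obtain r0 where D: "D = ray_class r0" using Ideal_Xbar[OF assms(1)] by blast
  obtain B1 where B1: "\<forall>t\<ge>0. dist (r0 t) (r t) \<le> B1" using assms(2) unfolding D ray_class_def asymptotic_def by blast
  obtain B2 where B2: "\<forall>t\<ge>0. dist (r0 t) (r' t) \<le> B2" using assms(3) unfolding D ray_class_def asymptotic_def by blast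
  have "\<forall>t\<ge>0. dist (r t) (r' t) \<le> B1 + B2"
  proof (intro allI impI)
    fix t :: real assume "t \<ge> 0"
    hence "dist (r0 t) (r t) \<le> B1" "dist (r0 t) (r' t) \<le> B2" using B1 B2 by auto
    thus "dist (r t) (r' t) \<le> B1 + B2" by (smt (verit) dist_commute dist_triangle)
  qed
  thus ?thesis by blast
qed

lemma asym_mem:
  assumes "Ideal D \<in> Xbar" "r \<in> D" "geod_ray r'" "\<forall>t\<ge>0. dist (r t) (r' t) \<le> B"
  shows "r' \<in> D"
proof -
  obtain r0 where D: "D = ray_class r0" using Ideal_Xbar[OF assms(1)] by blast
  obtain B1 where B1: "\<forall>t\<ge>0. dist (r0 t) (r t) \<le> B1" using assms(2) unfolding D ray_class_def asymptotic_def by blast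
  have "\<forall>t\<ge>0. dist (r0 t) (r' t) \<le> B1 + B"
  proof (intro allI impI)
    fix t :: real assume "t \<ge> 0"
    hence "dist (r0 t) (r t) \<le> B1" "dist (r t) (r' t) \<le> B" using B1 assms(4) by auto
    thus "dist (r0 t) (r' t) \<le> B1 + B" by (smt (verit) dist_triangle)
  qed
  thus ?thesis using assms(3) unfolding D ray_class_def asymptotic_def by blast
qed

lemma leg_unique:
  assumes cat: "CAT0 TYPE('a::metric_space)" and z: "z \<in> Xbar"
    and g1: "leg x z (g1 :: real \<Rightarrow> 'a)" and g2: "leg x z g2" and s: "s \<in> rng x z"
  shows "g1 s = g2 s"
proof (cases z)
  case (Fin q)
  show ?thesis
  proof (cases "s = 0")
    case True thus ?thesis using leg_0[OF g1] leg_0[OF g2] by simp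
  next
    case False
    define S where "S = dist x q"
    have sS: "0 \<le> s" "s \<le> S" using s unfolding Fin rng_def S_def by auto
    hence S: "S > 0" using False by simp
    have R: "rng x z = {0..S}" unfolding Fin rng_def S_def by simp
    have e: "g1 S = q" "g2 S = q" using g1 g2 unfolding leg_def Fin S_def by auto
    have "dist (g1 s) (g2 s) ^ 2 \<le> s^2 + s^2 - (s * s / (S * S)) * (S^2 + S^2 - dist (g1 S) (g2 S) ^ 2)"
      apply (rule L1[where g=g1 and h=g2 and x=x and S=S and T=S and s=s and t=s, OF cat leg_0[OF g1] leg_0[OF g2]])
      using leg_iso[OF g1] leg_iso[OF g2] R S sS by auto
    also have "\<dots> = 0" using e S by (simp add: power2_eq_square field_simps)
    finally show ?thesis by simp
  qed
next
  case (Ideal D)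
  have s0: "s \<ge> 0" using rng_nonneg[OF s] .
  have R: "rng x z = {0..}" unfolding Ideal rng_def by simp
  have m: "g1 \<in> D" "g2 \<in> D" using g1 g2 unfolding leg_def Ideal by auto
  obtain B where B: "\<forall>t\<ge>0. dist (g1 t) (g2 t) \<le> B" using asym_bound[OF z[unfolded Ideal] m] by blast
  show ?thesis
  proof (rule ccontr)
    assume ne: "g1 s \<noteq> g2 s"
    define \<epsilon> where "\<epsilon> = dist (g1 s) (g2 s) ^ 2"
    have ep: "\<epsilon> > 0" using ne unfolding \<epsilon>_def by simp
    have B0: "B \<ge> 0" using B[rule_format, of 0] by (meson order.trans zero_le_dist order_refl)
    define T where "T = max s 1 + s^2 * B^2 / \<epsilon> + 1"
    have nn: "s^2 * B^2 / \<epsilon> \<ge> 0" using ep by simp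
    have mx: "max s 1 \<ge> 1" "max s 1 \<ge> s" by auto
    have T1: "T \<ge> 1" "T \<ge> s" "T > s^2 * B^2 / \<epsilon>" unfolding T_def using mx nn by linarith+
    have "\<epsilon> \<le> s^2 + s^2 - (s * s / (T * T)) * (T^2 + T^2 - dist (g1 T) (g2 T) ^ 2)"
      unfolding \<epsilon>_def
      apply (rule L1[where g=g1 and h=g2 and x=x and S=T and T=T and s=s and t=s, OF cat leg_0[OF g1] leg_0[OF g2]])
      using leg_iso[OF g1] leg_iso[OF g2] R T1 s0 by auto
    also have "\<dots> = s^2 * dist (g1 T) (g2 T) ^ 2 / T^2" using T1 by (simp add: power2_eq_square field_simps)
    also have "\<dots> \<le> s^2 * B^2 / T^2"
      using B[rule_format, of T] T1 by (intro divide_right_mono mult_left_mono power_mono) auto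
    also have "\<dots> \<le> s^2 * B^2 / T"
      using T1 by (intro divide_left_mono) (auto simp: power2_eq_square)
    also have "\<dots> < \<epsilon>" using T1 ep by (simp add: field_simps)
    finally show False by simp
  qed
qed

lemma ray_leg:
  assumes "geod_ray c" "c 0 = x" "ray_through c x y"
  shows "leg x y c"
  using assms unfolding leg_def rng_def geod_ray_def by (cases y) auto

lemma M:
  fixes g' g'' h :: "real \<Rightarrow> 'a::metric_space"
  assumes cat: "CAT0 TYPE('a)"
    and g': "leg x z' g'" and g'': "leg x z'' g''" and h: "leg x w h"
    and nz': "z' \<noteq> Fin x" and nz'': "z'' \<noteq> Fin x"
    and ang: "alex_angle x (g', glen x z') (g'', glen x z'') = 0"
    and opp: "\<forall>s\<in>rng x z'. \<forall>t\<in>rng x w. dist (g' s) (h t) = s + t"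
  shows "\<forall>s\<in>rng x z''. \<forall>t\<in>rng x w. dist (g'' s) (h t) = s + t"
proof (intro ballI)
  fix s t assume s: "s \<in> rng x z''" and t: "t \<in> rng x w"
  have s0: "s \<ge> 0" using rng_nonneg[OF s] .
  have t0: "t \<ge> 0" using rng_nonneg[OF t] .
  have ds: "dist x (g'' s) = s" using leg_dist0[OF g'' s] .
  have dt: "dist x (h t) = t" using leg_dist0[OF h t] .
  have up: "dist (g'' s) (h t) \<le> s + t"
    using ds dt dist_triangle[of "g'' s" "h t" x] by (simp add: dist_commute)
  show "dist (g'' s) (h t) = s + t"
  proof (cases "s = 0 \<or> t = 0")
    case True
    thus ?thesis
    proof
      assume "s = 0" thus ?thesis using dt leg_0[OF g''] by simp
    next
      assume "t = 0" thus ?thesis using ds leg_0[OF h] by (simp add: dist_commute)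
    qed
  next
    case False
    hence sp: "s > 0" and tp: "t > 0" using s0 t0 by auto
    define D where "D = dist (g'' s) (h t)"
    define K where "K = s^2 + t^2 - D^2"
    have key: "K \<le> -2 * s * t + 2 * \<eta> * s * (s+t)" if eta: "0 < \<eta>" "\<eta> \<le> 1" for \<eta>
    proof -
      obtain e where e: "e > 0" "e \<le> min (glen x z') (glen x z'')"
        and ee: "\<forall>\<sigma>. 0 < \<sigma> \<and> \<sigma> < e \<longrightarrow> dist (g' \<sigma>) (g'' \<sigma>) \<le> \<eta> * \<sigma>"
        using angle0_small[OF leg_geod_from[OF g' nz'] leg_geod_from[OF g'' nz''] ang eta] by blast
      define \<sigma> where "\<sigma> = min (e/2) s"
      have sg: "\<sigma> > 0" "\<sigma> < e" "\<sigma> \<le> s" unfolding \<sigma>_def using e sp by auto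
      have sr: "\<sigma> \<in> rng x z'" using glen_rng[of \<sigma> x z'] sg e by simp
      have o: "dist (g' \<sigma>) (h t) = \<sigma> + t" using opp sr t by blast
      have a: "dist (g' \<sigma>) (g'' \<sigma>) \<le> \<eta> * \<sigma>" using ee sg by blast
      have lb: "\<sigma> + t - \<eta> * \<sigma> \<le> dist (g'' \<sigma>) (h t)"
        using o a dist_triangle[of "g' \<sigma>" "h t" "g'' \<sigma>"] by simp
      have L: "dist (g'' \<sigma>) (h t) ^ 2 \<le> \<sigma>^2 + t^2 - (\<sigma> * t / (s * t)) * (s^2 + t^2 - dist (g'' s) (h t) ^ 2)"
        apply (rule L1[where g=g'' and h=h and x=x and S=s and T=t and s=\<sigma> and t=t, OF cat leg_0[OF g''] leg_0[OF h]])
        using leg_iso[OF g''] leg_iso[OF h] rng_down[OF s] rng_down[OF t] sp tp sg by auto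
      have "\<eta> * \<sigma> \<le> 1 * \<sigma>" using eta sg by (intro mult_right_mono) auto
      hence pos: "0 \<le> \<sigma> + t - \<eta> * \<sigma>" using tp by simp
      have sq: "(\<sigma> + t - \<eta> * \<sigma>)^2 \<le> dist (g'' \<sigma>) (h t) ^ 2" using lb pos by (simp add: power_mono)
      have ex: "(\<sigma> + t - \<eta> * \<sigma>)^2 = \<sigma>^2 + 2 * \<sigma> * t + t^2 - 2 * \<eta> * \<sigma> * (\<sigma>+t) + (\<eta> * \<sigma>)^2"
        by (simp add: power2_eq_square algebra_simps)
      have fr: "\<sigma> * t / (s * t) = \<sigma> / s" using tp by simp
      have L': "dist (g'' \<sigma>) (h t) ^ 2 \<le> \<sigma>^2 + t^2 - (\<sigma> / s) * K"
        using L fr unfolding K_def D_def by simp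
      have "(\<eta> * \<sigma>)^2 \<ge> 0" by simp
      hence "\<sigma>^2 + 2 * \<sigma> * t + t^2 - 2 * \<eta> * \<sigma> * (\<sigma>+t) \<le> \<sigma>^2 + t^2 - (\<sigma> / s) * K"
        using sq L' ex by linarith
      hence i1: "(\<sigma> / s) * K \<le> 2 * \<eta> * \<sigma> * (\<sigma>+t) - 2 * \<sigma> * t" by linarith
      have "K = (s / \<sigma>) * ((\<sigma> / s) * K)" using sg sp by (simp add: field_simps)
      also have "\<dots> \<le> (s / \<sigma>) * (2 * \<eta> * \<sigma> * (\<sigma>+t) - 2 * \<sigma> * t)"
        using i1 sg sp by (intro mult_left_mono) auto
      also have "\<dots> = 2 * \<eta> * s * (\<sigma>+t) - 2 * s * t" using sg by (simp add: field_simps)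
      finally have k1: "K \<le> 2 * \<eta> * s * (\<sigma>+t) - 2 * s * t" .
      have "\<eta> * s * (\<sigma>+t) \<le> \<eta> * s * (s+t)" using sg eta sp by (intro mult_left_mono) auto
      thus ?thesis using k1 by linarith
    qed
    have Kle: "K \<le> -2 * s * t"
    proof (rule ccontr)
      assume "\<not> ?thesis"
      hence Kp: "K + 2 * s * t > 0" by simp
      define \<eta> where "\<eta> = min 1 ((K + 2 * s * t) / (4 * s * (s+t)))"
      have st: "4 * s * (s+t) > 0" using sp tp by simp
      have ep: "0 < \<eta>" "\<eta> \<le> 1" unfolding \<eta>_def using Kp st by auto
      have "\<eta> \<le> (K + 2 * s * t) / (4 * s * (s+t))" unfolding \<eta>_def by simp
      hence "\<eta> * (4 * s * (s+t)) \<le> K + 2 * s * t" using st by (simp add: field_simps)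
      moreover have "2 * \<eta> * s * (s+t) = (\<eta> * (4 * s * (s+t))) / 2" by (simp add: algebra_simps)
      ultimately show False using key[OF ep] Kp by linarith
    qed
    moreover have "(s+t)^2 = s^2 + 2 * s * t + t^2" by (simp add: power2_sum)
    ultimately have "(s+t)^2 \<le> D^2" using K_def by linarith
    moreover have "D \<ge> 0" unfolding D_def by simp
    ultimately have "s + t \<le> D" by (rule power2_le_imp_le)
    thus ?thesis using up unfolding D_def by linarith
  qed
qed

lemma rng_Fin: "rng x (Fin q) = {0..dist x q}" by (simp add: rng_def)
lemma rng_Ideal: "rng x (Ideal D) = {0..}" by (simp add: rng_def)

lemma leg_Fin: "leg x (Fin q) g \<longleftrightarrow> g 0 = x \<and> (\<forall>s\<in>{0..dist x q}. \<forall>t\<in>{0..dist x q}. dist (g s) (g t) = \<bar>s - t\<bar>) \<and> g (dist x q) = q"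
  by (simp add: leg_def rng_def)

lemma leg_Ideal: "leg x (Ideal D) g \<longleftrightarrow> g 0 = x \<and> geod_ray g \<and> g \<in> D"
  by (auto simp add: leg_def rng_def geod_ray_def)

lemma split_FF:
  assumes g: "geod_seg g p q" and x: "x = g \<tau>" and t: "0 \<le> \<tau>" "\<tau> \<le> dist p q"
  shows "leg x (Fin p) (\<lambda>s. g (\<tau> - s)) \<and> leg x (Fin q) (\<lambda>t. g (\<tau> + t)) \<and>
    (\<forall>s\<in>rng x (Fin p). \<forall>t\<in>rng x (Fin q). dist (g (\<tau> - s)) (g (\<tau> + t)) = s + t)"
proof -
  define d where "d = dist p q"
  have g0: "g 0 = p" and gd: "g d = q" and gi: "\<forall>a\<in>{0..d}. \<forall>b\<in>{0..d}. dist (g a) (g b) = \<bar>a - b\<bar>"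
    using g unfolding geod_seg_def d_def by auto
  have td: "0 \<le> \<tau>" "\<tau> \<le> d" using t d_def by auto
  have dp: "dist x p = \<tau>" using gi[rule_format, of \<tau> 0] td x g0 by simp
  have dq: "dist x q = d - \<tau>" using gi[rule_format, of \<tau> d] td x gd by simp
  show ?thesis
    unfolding leg_Fin rng_Fin dp dq
  proof (intro conjI ballI)
    show "g (\<tau> - 0) = x" using x by simp
    show "g (\<tau> + 0) = x" using x by simp
    show "g (\<tau> - \<tau>) = p" using g0 by simp
    show "g (\<tau> + (d - \<tau>)) = q" using gd by simp
    fix s s' :: real assume "s \<in> {0..\<tau>}" "s' \<in> {0..\<tau>}"
    thus "dist (g (\<tau> - s)) (g (\<tau> - s')) = \<bar>s - s'\<bar>"
      using gi[rule_format, of "\<tau> - s" "\<tau> - s'"] td by (simp add: abs_minus_commute)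
  next
    fix s s' :: real assume "s \<in> {0..d - \<tau>}" "s' \<in> {0..d - \<tau>}"
    thus "dist (g (\<tau> + s)) (g (\<tau> + s')) = \<bar>s - s'\<bar>"
      using gi[rule_format, of "\<tau> + s" "\<tau> + s'"] td by simp
  next
    fix s s' :: real assume "s \<in> {0..\<tau>}" "s' \<in> {0..d - \<tau>}"
    thus "dist (g (\<tau> - s)) (g (\<tau> + s')) = s + s'"
      using gi[rule_format, of "\<tau> - s" "\<tau> + s'"] td by simp
  qed
qed

lemma split_FI:
  assumes r: "geod_ray r" "r 0 = p" "r \<in> D" and DX: "Ideal D \<in> Xbar" and x: "x = r \<tau>" and t: "0 \<le> \<tau>"
  shows "leg x (Fin p) (\<lambda>s. r (\<tau> - s)) \<and> leg x (Ideal D) (\<lambda>t. r (\<tau> + t)) \<and>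
    (\<forall>s\<in>rng x (Fin p). \<forall>t\<in>rng x (Ideal D). dist (r (\<tau> - s)) (r (\<tau> + t)) = s + t)"
proof -
  have ri: "\<And>a b. a \<ge> 0 \<Longrightarrow> b \<ge> 0 \<Longrightarrow> dist (r a) (r b) = \<bar>a - b\<bar>" using r(1) unfolding geod_ray_def by blast
  have dp: "dist x p = \<tau>" using ri[of \<tau> 0] t x r(2) by simp
  have gr: "geod_ray (\<lambda>t. r (\<tau> + t))" unfolding geod_ray_def using ri t by simp
  have mem: "(\<lambda>t. r (\<tau> + t)) \<in> D"
    apply (rule asym_mem[OF DX r(3) gr, of \<tau>]) using ri t by simp
  show ?thesis
    unfolding leg_Fin leg_Ideal rng_Fin rng_Ideal dp
  proof (intro conjI ballI gr mem)
    show "r (\<tau> - 0) = x" using x by simp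
    show "r (\<tau> + 0) = x" using x by simp
    show "r (\<tau> - \<tau>) = p" using r(2) by simp
    fix s s' :: real assume "s \<in> {0..\<tau>}" "s' \<in> {0..\<tau>}"
    thus "dist (r (\<tau> - s)) (r (\<tau> - s')) = \<bar>s - s'\<bar>"
      using ri[of "\<tau> - s" "\<tau> - s'"] by (simp add: abs_minus_commute)
  next
    fix s s' :: real assume "s \<in> {0..\<tau>}" "s' \<in> {0..}"
    thus "dist (r (\<tau> - s)) (r (\<tau> + s')) = s + s'"
      using ri[of "\<tau> - s" "\<tau> + s'"] by simp
  qed
qed

lemma split_II:
  assumes l: "geod_line l" "l \<in> D" "(\<lambda>t. l (- t)) \<in> C" and CX: "Ideal C \<in> Xbar" and DX: "Ideal D \<in> Xbar"
    and x: "x = l \<tau>"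
  shows "leg x (Ideal C) (\<lambda>s. l (\<tau> - s)) \<and> leg x (Ideal D) (\<lambda>t. l (\<tau> + t)) \<and>
    (\<forall>s\<in>rng x (Ideal C). \<forall>t\<in>rng x (Ideal D). dist (l (\<tau> - s)) (l (\<tau> + t)) = s + t)"
proof -
  have li: "\<And>a b. dist (l a) (l b) = \<bar>a - b\<bar>" using l(1) unfolding geod_line_def by blast
  have gr1: "geod_ray (\<lambda>s. l (\<tau> - s))" unfolding geod_ray_def using li by (simp add: abs_minus_commute)
  have gr2: "geod_ray (\<lambda>t. l (\<tau> + t))" unfolding geod_ray_def using li by simp
  have m1: "(\<lambda>s. l (\<tau> - s)) \<in> C"
    apply (rule asym_mem[OF CX l(3) gr1, of "\<bar>\<tau>\<bar>"]) using li by simp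
  have m2: "(\<lambda>t. l (\<tau> + t)) \<in> D"
    apply (rule asym_mem[OF DX l(2) gr2, of "\<bar>\<tau>\<bar>"]) using li by simp
  show ?thesis
    unfolding leg_Ideal rng_Ideal
  proof (intro conjI ballI gr1 gr2 m1 m2)
    show "l (\<tau> - 0) = x" using x by simp
    show "l (\<tau> + 0) = x" using x by simp
    fix s s' :: real assume "s \<in> {0..}" "s' \<in> {0..}"
    thus "dist (l (\<tau> - s)) (l (\<tau> + s')) = s + s'" using li[of "\<tau> - s" "\<tau> + s'"] by simp
  qed
qed

lemma split_geod:
  assumes u: "u \<in> Xbar" and v: "v \<in> Xbar" and S: "S \<in> geods u v" and xS: "x \<in> S"
  shows "\<exists>gu gv. leg x u gu \<and> leg x v gv \<and> (\<forall>s\<in>rng x u. \<forall>t\<in>rng x v. dist (gu s) (gv t) = s + t)"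
proof (cases u)
  case (Fin p)
  note up = Fin
  show ?thesis
  proof (cases v)
    case (Fin q)
    obtain g where g: "S = g ` {0..dist p q}" "geod_seg g p q" using S unfolding up Fin by auto
    obtain \<tau> where t: "\<tau> \<in> {0..dist p q}" "x = g \<tau>" using xS g(1) by auto
    show ?thesis unfolding up Fin using split_FF[OF g(2) t(2)] t(1) by auto
  next
    case (Ideal D)
    obtain r where r: "S = r ` {0..}" "geod_ray r" "r 0 = p" "r \<in> D" using S unfolding up Ideal by auto
    obtain \<tau> where t: "\<tau> \<ge> 0" "x = r \<tau>" using xS r(1) by auto
    show ?thesis unfolding up Ideal using split_FI[OF r(2-4) v[unfolded Ideal] t(2,1)] by blast
  qed
next
  case (Ideal C)
  note uC = Ideal
  show ?thesis
  proof (cases v)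
    case (Fin q)
    obtain r where r: "S = r ` {0..}" "geod_ray r" "r 0 = q" "r \<in> C" using S unfolding uC Fin by auto
    obtain \<tau> where t: "\<tau> \<ge> 0" "x = r \<tau>" using xS r(1) by auto
    have "leg x (Fin q) (\<lambda>s. r (\<tau> - s)) \<and> leg x (Ideal C) (\<lambda>t. r (\<tau> + t)) \<and>
      (\<forall>s\<in>rng x (Fin q). \<forall>t\<in>rng x (Ideal C). dist (r (\<tau> - s)) (r (\<tau> + t)) = s + t)"
      using split_FI[OF r(2-4) u[unfolded uC] t(2,1)] .
    hence "leg x (Ideal C) (\<lambda>t. r (\<tau> + t)) \<and> leg x (Fin q) (\<lambda>s. r (\<tau> - s)) \<and>
      (\<forall>t\<in>rng x (Ideal C). \<forall>s\<in>rng x (Fin q). dist (r (\<tau> + t)) (r (\<tau> - s)) = t + s)"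
      by (simp add: dist_commute add.commute)
    thus ?thesis unfolding uC Fin by blast
  next
    case (Ideal D)
    obtain l where l: "S = range l" "geod_line l" "l \<in> D" "(\<lambda>t. l (- t)) \<in> C" using S unfolding uC Ideal by auto
    obtain \<tau> where t: "x = l \<tau>" using xS l(1) by auto
    show ?thesis unfolding uC Ideal using split_II[OF l(2-4) u[unfolded uC] v[unfolded Ideal] t] by blast
  qed
qed

lemma concat_iso:
  fixes gu gv :: "real \<Rightarrow> 'a::metric_space"
  assumes a: "a \<ge> 0" and ui: "\<forall>s\<in>{0..a}. \<forall>s'\<in>{0..a}. dist (gu s) (gu s') = \<bar>s - s'\<bar>"
    and vi: "\<forall>t\<in>R. \<forall>t'\<in>R. dist (gv t) (gv t') = \<bar>t - t'\<bar>"
    and uv: "\<forall>s\<in>{0..a}. \<forall>t\<in>R. dist (gu s) (gv t) = s + t"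
    and s: "0 \<le> \<sigma>" "\<sigma> > a \<Longrightarrow> \<sigma> - a \<in> R" and t: "0 \<le> \<tau>" "\<tau> > a \<Longrightarrow> \<tau> - a \<in> R"
  shows "dist (if \<sigma> \<le> a then gu (a - \<sigma>) else gv (\<sigma> - a)) (if \<tau> \<le> a then gu (a - \<tau>) else gv (\<tau> - a)) = \<bar>\<sigma> - \<tau>\<bar>"
proof (cases "\<sigma> \<le> a")
  case True
  show ?thesis
  proof (cases "\<tau> \<le> a")
    case True2: True
    thus ?thesis using True ui[rule_format, of "a - \<sigma>" "a - \<tau>"] s t by (simp add: abs_minus_commute)
  next
    case False
    thus ?thesis using True uv[rule_format, of "a - \<sigma>" "\<tau> - a"] s t by simp
  qed
next
  case False
  show ?thesis
  proof (cases "\<tau> \<le> a")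
    case True
    thus ?thesis using False uv[rule_format, of "a - \<tau>" "\<sigma> - a"] s t by (simp add: dist_commute)
  next
    case False2: False
    thus ?thesis using False vi[rule_format, of "\<sigma> - a" "\<tau> - a"] s t by simp
  qed
qed

lemma join_FF:
  assumes gu: "leg x (Fin p) gu" and gv: "leg x (Fin q) gv"
    and opp: "\<forall>s\<in>rng x (Fin p). \<forall>t\<in>rng x (Fin q). dist (gu s) (gv t) = s + t"
  shows "\<exists>S\<in>geods (Fin p) (Fin q). x \<in> S"
proof -
  define a where "a = dist x p"
  define b where "b = dist x q"
  have u0: "gu 0 = x" and ui: "\<forall>s\<in>{0..a}. \<forall>s'\<in>{0..a}. dist (gu s) (gu s') = \<bar>s - s'\<bar>" and ua: "gu a = p"
    using gu unfolding leg_Fin a_def by auto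
  have v0: "gv 0 = x" and vi: "\<forall>s\<in>{0..b}. \<forall>s'\<in>{0..b}. dist (gv s) (gv s') = \<bar>s - s'\<bar>" and vb: "gv b = q"
    using gv unfolding leg_Fin b_def by auto
  have uv: "\<forall>s\<in>{0..a}. \<forall>t\<in>{0..b}. dist (gu s) (gv t) = s + t" using opp unfolding rng_Fin a_def b_def .
  have a0: "a \<ge> 0" "b \<ge> 0" unfolding a_def b_def by auto
  have dpq: "dist p q = a + b" using uv[rule_format, of a b] ua vb a0 by simp
  define G where "G = (\<lambda>\<sigma>. if \<sigma> \<le> a then gu (a - \<sigma>) else gv (\<sigma> - a))"
  have seg: "geod_seg G p q"
    unfolding geod_seg_def dpq
  proof (intro conjI ballI)
    show "G 0 = p" unfolding G_def using a0 ua by simp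
    show "G (a + b) = q"
    proof (cases "b = 0")
      case True thus ?thesis unfolding G_def using u0 v0 vb by simp
    next
      case False thus ?thesis unfolding G_def using a0 vb by simp
    qed
    fix \<sigma> \<tau> assume "\<sigma> \<in> {0..a + b}" "\<tau> \<in> {0..a + b}"
    thus "dist (G \<sigma>) (G \<tau>) = \<bar>\<sigma> - \<tau>\<bar>" unfolding G_def
      by (intro concat_iso[OF a0(1) ui vi uv]) auto
  qed
  have "x = G a" unfolding G_def using u0 by simp
  hence "x \<in> G ` {0..dist p q}" using dpq a0 by auto
  thus ?thesis using seg by auto
qed

lemma join_FI:
  assumes gu: "leg x (Fin p) gu" and gv: "leg x (Ideal D) gv" and DX: "Ideal D \<in> Xbar"
    and opp: "\<forall>s\<in>rng x (Fin p). \<forall>t\<in>rng x (Ideal D). dist (gu s) (gv t) = s + t"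
  shows "\<exists>r. geod_ray r \<and> r 0 = p \<and> r \<in> D \<and> x \<in> r ` {0..}"
proof -
  define a where "a = dist x p"
  have u0: "gu 0 = x" and ui: "\<forall>s\<in>{0..a}. \<forall>s'\<in>{0..a}. dist (gu s) (gu s') = \<bar>s - s'\<bar>" and ua: "gu a = p"
    using gu unfolding leg_Fin a_def by auto
  have v0: "gv 0 = x" and vr: "geod_ray gv" and vD: "gv \<in> D" using gv unfolding leg_Ideal by auto
  have vi: "\<forall>s\<in>{0..}. \<forall>s'\<in>{0..}. dist (gv s) (gv s') = \<bar>s - s'\<bar>" using vr unfolding geod_ray_def by auto
  have uv: "\<forall>s\<in>{0..a}. \<forall>t\<in>{0..}. dist (gu s) (gv t) = s + t" using opp unfolding rng_Fin rng_Ideal a_def .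
  have a0: "a \<ge> 0" unfolding a_def by auto
  define G where "G = (\<lambda>\<sigma>. if \<sigma> \<le> a then gu (a - \<sigma>) else gv (\<sigma> - a))"
  have gr: "geod_ray G" unfolding geod_ray_def
  proof (intro allI impI)
    fix \<sigma> \<tau> :: real assume "\<sigma> \<ge> 0" "\<tau> \<ge> 0"
    thus "dist (G \<sigma>) (G \<tau>) = \<bar>\<sigma> - \<tau>\<bar>" unfolding G_def
      by (intro concat_iso[OF a0 ui vi uv]) auto
  qed
  have bd: "\<forall>t\<ge>0. dist (gv t) (G t) \<le> a"
  proof (intro allI impI)
    fix t :: real assume t: "t \<ge> 0"
    show "dist (gv t) (G t) \<le> a"
    proof (cases "t \<le> a")
      case True thus ?thesis unfolding G_def using uv[rule_format, of "a - t" t] t by (simp add: dist_commute)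
    next
      case False thus ?thesis unfolding G_def using vi[rule_format, of t "t - a"] t a0 by simp
    qed
  qed
  have GD: "G \<in> D" using asym_mem[OF DX vD gr bd] .
  have G0: "G 0 = p" unfolding G_def using a0 ua by simp
  have "x = G a" unfolding G_def using u0 by simp
  hence "x \<in> G ` {0..}" using a0 by auto
  thus ?thesis using gr GD G0 by blast
qed

lemma join_II:
  assumes gu: "leg x (Ideal C) gu" and gv: "leg x (Ideal D) gv" and CX: "Ideal C \<in> Xbar" and DX: "Ideal D \<in> Xbar"
    and opp: "\<forall>s\<in>rng x (Ideal C). \<forall>t\<in>rng x (Ideal D). dist (gu s) (gv t) = s + t"
  shows "\<exists>S\<in>geods (Ideal C) (Ideal D). x \<in> S"
proof -
  have u0: "gu 0 = x" and ur: "geod_ray gu" and uC: "gu \<in> C" using gu unfolding leg_Ideal by auto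
  have v0: "gv 0 = x" and vr: "geod_ray gv" and vD: "gv \<in> D" using gv unfolding leg_Ideal by auto
  have ui: "\<And>s s'. s \<ge> 0 \<Longrightarrow> s' \<ge> 0 \<Longrightarrow> dist (gu s) (gu s') = \<bar>s - s'\<bar>" using ur unfolding geod_ray_def by auto
  have vi: "\<And>s s'. s \<ge> 0 \<Longrightarrow> s' \<ge> 0 \<Longrightarrow> dist (gv s) (gv s') = \<bar>s - s'\<bar>" using vr unfolding geod_ray_def by auto
  have uv: "\<And>s t. s \<ge> 0 \<Longrightarrow> t \<ge> 0 \<Longrightarrow> dist (gu s) (gv t) = s + t" using opp unfolding rng_Ideal by auto
  define l where "l = (\<lambda>\<tau>. if \<tau> \<ge> 0 then gv \<tau> else gu (- \<tau>))"
  have gl: "geod_line l" unfolding geod_line_def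
  proof (intro allI)
    fix \<sigma> \<tau> :: real
    show "dist (l \<sigma>) (l \<tau>) = \<bar>\<sigma> - \<tau>\<bar>"
    proof (cases "\<sigma> \<ge> 0")
      case True
      show ?thesis
      proof (cases "\<tau> \<ge> 0")
        case True2: True
        thus ?thesis unfolding l_def using True vi by simp
      next
        case False
        thus ?thesis unfolding l_def using True uv[of "- \<tau>" \<sigma>] by (simp add: dist_commute)
      qed
    next
      case False
      show ?thesis
      proof (cases "\<tau> \<ge> 0")
        case True
        thus ?thesis unfolding l_def using False uv[of "- \<sigma>" \<tau>] by simp
      next
        case False2: False
        thus ?thesis unfolding l_def using False ui[of "- \<sigma>" "- \<tau>"] by simp
      qed
    qed
  qed
  have li: "\<And>a b. dist (l a) (l b) = \<bar>a - b\<bar>" using gl unfolding geod_line_def by blast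
  have r1: "geod_ray l" unfolding geod_ray_def using li by simp
  have r2: "geod_ray (\<lambda>t. l (- t))" unfolding geod_ray_def using li by (simp add: abs_minus_commute)
  have lD: "l \<in> D" apply (rule asym_mem[OF DX vD r1, of 0]) unfolding l_def by simp
  have lC: "(\<lambda>t. l (- t)) \<in> C" apply (rule asym_mem[OF CX uC r2, of 0]) unfolding l_def using u0 v0 by simp
  have "x = l 0" unfolding l_def using v0 by simp
  hence "x \<in> range l" by simp
  thus ?thesis using gl lD lC by auto
qed

lemma join_geod:
  assumes u: "u \<in> Xbar" and v: "v \<in> Xbar" and gu: "leg x u gu" and gv: "leg x v gv"
    and opp: "\<forall>s\<in>rng x u. \<forall>t\<in>rng x v. dist (gu s) (gv t) = s + t"
  shows "\<exists>S\<in>geods u v. x \<in> S"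
proof (cases u)
  case (Fin p)
  note up = Fin
  show ?thesis
  proof (cases v)
    case (Fin q)
    show ?thesis using join_FF[OF gu[unfolded up] gv[unfolded Fin] opp[unfolded up Fin]] unfolding up Fin .
  next
    case (Ideal D)
    obtain r where "geod_ray r" "r 0 = p" "r \<in> D" "x \<in> r ` {0..}"
      using join_FI[OF gu[unfolded up] gv[unfolded Ideal] v[unfolded Ideal] opp[unfolded up Ideal]] by blast
    thus ?thesis unfolding up Ideal by auto
  qed
next
  case (Ideal C)
  note uC = Ideal
  show ?thesis
  proof (cases v)
    case (Fin q)
    have opp': "\<forall>s\<in>rng x (Fin q). \<forall>t\<in>rng x (Ideal C). dist (gv s) (gu t) = s + t"
      using opp unfolding uC Fin by (simp add: dist_commute add.commute)
    obtain r where "geod_ray r" "r 0 = q" "r \<in> C" "x \<in> r ` {0..}"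
      using join_FI[OF gv[unfolded Fin] gu[unfolded uC] u[unfolded uC] opp'] by blast
    thus ?thesis unfolding uC Fin by auto
  next
    case (Ideal D)
    show ?thesis using join_II[OF gu[unfolded uC] gv[unfolded Ideal] u[unfolded uC] v[unfolded Ideal] opp[unfolded uC Ideal]] unfolding uC Ideal .
  qed
qed

lemma incl:
  fixes g' g'' :: "real \<Rightarrow> 'a::metric_space"
  assumes cat: "CAT0 TYPE('a)" and z'X: "z' \<in> Xbar" and z''X: "z'' \<in> Xbar"
    and nz': "z' \<noteq> Fin x" and nz'': "z'' \<noteq> Fin x"
    and g': "leg x z' g'" and g'': "leg x z'' g''"
    and ang: "alex_angle x (g', glen x z') (g'', glen x z'') = 0"
    and w: "w \<in> Shadow z' x"
  shows "w \<in> Shadow z'' x"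
proof -
  obtain S where wX: "w \<in> Xbar" and S: "S \<in> geods z' w" and xS: "x \<in> S"
    using w unfolding Shadow_def by blast
  obtain G h where G: "leg x z' G" and h: "leg x w h"
    and o: "\<forall>s\<in>rng x z'. \<forall>t\<in>rng x w. dist (G s) (h t) = s + t"
    using split_geod[OF z'X wX S xS] by blast
  have o': "\<forall>s\<in>rng x z'. \<forall>t\<in>rng x w. dist (g' s) (h t) = s + t"
    using o leg_unique[OF cat z'X G g'] by simp
  have o'': "\<forall>s\<in>rng x z''. \<forall>t\<in>rng x w. dist (g'' s) (h t) = s + t"
    using M[OF cat g' g'' h nz' nz'' ang o'] .
  obtain S' where "S' \<in> geods z'' w" "x \<in> S'" using join_geod[OF z''X wX g'' h o''] by blast
  thus ?thesis unfolding Shadow_def using wX by blast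
qed

lemma const_dir_cauchy:
  assumes "geod_from x u"
  shows "dir_cauchy x (\<lambda>n. u)"
proof -
  obtain g a where u: "u = (g, a)" by (cases u)
  show ?thesis unfolding dir_cauchy_def using assms angle_self[of x g a] u by auto
qed

theorem corollary3:
  fixes x0 :: "'a::complete_space" and y z' z'' :: "'a bpt" and c :: "real \<Rightarrow> 'a"
  assumes "CAT0 TYPE('a)"
    and "locally compact (UNIV :: 'a set)"
    and "geodesically_complete TYPE('a)"
    and "connected_at_infinity TYPE('a)"
    and "y \<in> Xbar" and "y \<noteq> Fin x0"
    and "geod_ray c" and "c 0 = x0" and "ray_through c x0 y"
    and "unique_inverse_dir x0 (c, 1)"
    and "z' \<in> Shadow y x0" and "z'' \<in> Shadow y x0"
    and "z' \<noteq> Fin x0" and "z'' \<noteq> Fin x0"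
  shows "Shadow z' x0 = Shadow z'' x0"
proof -
  note cat = assms(1) and yX = assms(5) and ny = assms(6) and cr = assms(7) and c0 = assms(8)
    and uid = assms(10) and nz' = assms(13) and nz'' = assms(14)
  have cleg: "leg x0 y c" using ray_leg[OF cr c0 assms(9)] .
  have side: "\<exists>g. leg x0 z g \<and> alex_angle x0 (c, 1) (g, glen x0 z) = pi"
    if z: "z \<in> Shadow y x0" and nz: "z \<noteq> Fin x0" for z
  proof -
    obtain S where zX: "z \<in> Xbar" and S: "S \<in> geods y z" and xS: "x0 \<in> S"
      using z unfolding Shadow_def by blast
    obtain k g where k: "leg x0 y k" and g: "leg x0 z g"
      and o: "\<forall>s\<in>rng x0 y. \<forall>t\<in>rng x0 z. dist (k s) (g t) = s + t"
      using split_geod[OF yX zX S xS] by blast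
    have kc: "\<forall>s\<in>rng x0 y. k s = c s" using leg_unique[OF cat yX k cleg] by blast
    define \<rho> where "\<rho> = min (glen x0 y) (glen x0 z)"
    have rp: "\<rho> > 0" unfolding \<rho>_def using glen_pos[OF ny] glen_pos[OF nz] by simp
    have "alex_angle x0 (c, 1) (g, glen x0 z) = pi"
    proof (rule angle_pi[OF cr c0 leg_geod_from[OF g nz] rp])
      fix s t :: real assume st: "0 < s" "s < \<rho>" "0 < t" "t < \<rho>"
      have sr: "s \<in> rng x0 y" using glen_rng[of s x0 y] st unfolding \<rho>_def by simp
      have tr: "t \<in> rng x0 z" using glen_rng[of t x0 z] st unfolding \<rho>_def by simp
      show "dist (c s) (g t) = s + t" using o sr tr kc by metis
    qed
    thus ?thesis using g by blast
  qed
  obtain g' where g': "leg x0 z' g'" and a': "alex_angle x0 (c, 1) (g', glen x0 z') = pi"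
    using side[OF assms(11) nz'] by blast
  obtain g'' where g'': "leg x0 z'' g''" and a'': "alex_angle x0 (c, 1) (g'', glen x0 z'') = pi"
    using side[OF assms(12) nz''] by blast
  have uniq: "\<forall>v w. dir_cauchy x0 v \<and> dir_cauchy x0 w \<and>
            (\<lambda>n. alex_angle x0 (c, 1) (v n)) \<longlonglongrightarrow> pi \<and> (\<lambda>n. alex_angle x0 (c, 1) (w n)) \<longlonglongrightarrow> pi
            \<longrightarrow> (\<lambda>n. alex_angle x0 (v n) (w n)) \<longlonglongrightarrow> 0"
    using uid unfolding unique_inverse_dir_def by blast
  have d': "dir_cauchy x0 (\<lambda>n. (g', glen x0 z'))" using const_dir_cauchy[OF leg_geod_from[OF g' nz']] .
  have d'': "dir_cauchy x0 (\<lambda>n. (g'', glen x0 z''))" using const_dir_cauchy[OF leg_geod_from[OF g'' nz'']] .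
  have "(\<lambda>n. alex_angle x0 (g', glen x0 z') (g'', glen x0 z'')) \<longlonglongrightarrow> 0"
    using uniq[rule_format, OF conjI[OF d' conjI[OF d'' conjI]]] a' a'' by simp
  hence ang1: "alex_angle x0 (g', glen x0 z') (g'', glen x0 z'') = 0" by (simp add: LIMSEQ_const_iff)
  have "(\<lambda>n. alex_angle x0 (g'', glen x0 z'') (g', glen x0 z')) \<longlonglongrightarrow> 0"
    using uniq[rule_format, OF conjI[OF d'' conjI[OF d' conjI]]] a' a'' by simp
  hence ang2: "alex_angle x0 (g'', glen x0 z'') (g', glen x0 z') = 0" by (simp add: LIMSEQ_const_iff)
  have z'X: "z' \<in> Xbar" and z''X: "z'' \<in> Xbar" using assms(11,12) unfolding Shadow_def by auto
  show ?thesis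
  proof
    show "Shadow z' x0 \<subseteq> Shadow z'' x0"
      using incl[OF cat z'X z''X nz' nz'' g' g'' ang1] by blast
    show "Shadow z'' x0 \<subseteq> Shadow z' x0"
      using incl[OF cat z''X z'X nz'' nz' g'' g' ang2] by blast
  qed
qed

end
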